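(* Let $\alpha:U\to V$ be a surjective transmission between supertropical semirings (viewed as supertropical monoids), $M:=eU$, $N:=eV$, and let $\alpha=\mu\circ\beta\circ\lambda$ with $\lambda:U\to U_1$ an ideal compression, $\beta:U_1\to V_1$ a strict ghost contraction and $\mu:V_1\to V$ a tangible fiber contraction over $N$, where $U_1,V_1$ are supertropical monoids. Then $U_1$ and $V_1$ are supertropical semirings; hence $\lambda,\beta,\mu$ are transmissions between supertropical semirings.
   Context: All monoids are commutative. A supertropical monoid is a monoid $(U,\cdot)$ with absorbing element $0$ and distinguished idempotent $e$ with $ex=0\Rightarrow x=0$, together with a total ordering on $M:=eU$, compatible with multiplication and with $0$ least, making $M$ a bipotent semiring (addition $=\max$). $\mathcal T(U):=U\setminus eU$. Define on $U$: $x+y:=y$ if $ex<ey$, $x$ if $ex>ey$, $ex$ if $ex=ey$; $U$ is a (supertropical) semiring if this addition is associative and distributive (supertropical semirings are exactly the supertropical monoids that are semirings in this sense). A transmission $\alpha:U\to V$ is a map with $\alpha(0)=0$, $\alpha(1)=1$, multiplicative, $\alpha(e_U)=e_V$, order-preserving on $eU$; ghost part $\alpha^\nu$ = restriction to $eU$; ghost kernel $\mathfrak A_\alpha:=\{x:\alpha(x)\in eV\}$; zero kernel $\mathfrak z_\alpha:=\alpha^{-1}(0)$. A fiber contraction is a surjective transmission whose ghost part is an isomorphism; "over $N$" if the ghost part is the identity of $N$. An ideal compression is a fiber contraction over $eU$ mapping $U\setminus\mathfrak A_\alpha$ bijectively onto $\mathcal T(V)$. A transmission is tangible if $\alpha(\mathcal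 T(U))\subset\mathcal T(V)\cup\{0\}$. A ghost contraction is a transmission whose ghost part is surjective and which maps $U\setminus(eU\cup\mathfrak z_\alpha)$ bijectively onto $\mathcal T(V)$; strict if $\alpha^{-1}(0)\subset eU$. *)

theory Defs
  imports Main
begin

text \<open>A (commutative) monoid with absorbing zero, distinguished idempotent e and
a relation le intended to be a total order on the ghost ideal eU.
Elements live in a carrier set.\<close>

record 'a stm =
  stcar :: "'a set"
  smul :: "'a \<Rightarrow> 'a \<Rightarrow> 'a"
  sone :: 'a
  szero :: 'a
  se :: 'a
  sle :: "'a \<Rightarrow> 'a \<Rightarrow> bool"

definition gh :: "('a, 'b) stm_scheme \<Rightarrow> 'a set" where
  "gh U = (\<lambda>x. smul U (se U) x) ` stcar U"

definition tang :: "('a, 'b) stm_scheme \<Rightarrow> 'a set" where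
  "tang U = stcar U - gh U"

definition slt :: "('a, 'b) stm_scheme \<Rightarrow> 'a \<Rightarrow> 'a \<Rightarrow> bool" where
  "slt U x y \<longleftrightarrow> sle U x y \<and> x \<noteq> y"

definition supertropical_monoid :: "('a, 'b) stm_scheme \<Rightarrow> bool" where
  "supertropical_monoid U \<longleftrightarrow>
     (\<forall>x\<in>stcar U. \<forall>y\<in>stcar U. smul U x y \<in> stcar U) \<and>
     sone U \<in> stcar U \<and> szero U \<in> stcar U \<and> se U \<in> stcar U \<and>
     (\<forall>x\<in>stcar U. \<forall>y\<in>stcar U. \<forall>z\<in>stcar U.
        smul U (smul U x y) z = smul U x (smul U y z)) \<and>
     (\<forall>x\<in>stcar U. \<forall>y\<in>stcar U. smul U x y = smul U y x) \<and>
     (\<forall>x\<in>stcar U. smul U (sone U) x = x) \<and>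
     (\<forall>x\<in>stcar U. smul U (szero U) x = szero U) \<and>
     smul U (se U) (se U) = se U \<and>
     (\<forall>x\<in>stcar U. smul U (se U) x = szero U \<longrightarrow> x = szero U) \<and>
     \<comment> \<open>total order on M = eU\<close>
     (\<forall>x\<in>gh U. sle U x x) \<and>
     (\<forall>x\<in>gh U. \<forall>y\<in>gh U. sle U x y \<and> sle U y x \<longrightarrow> x = y) \<and>
     (\<forall>x\<in>gh U. \<forall>y\<in>gh U. \<forall>z\<in>gh U. sle U x y \<and> sle U y z \<longrightarrow> sle U x z) \<and>
     (\<forall>x\<in>gh U. \<forall>y\<in>gh U. sle U x y \<or> sle U y x) \<and>
     \<comment> \<open>compatible with multiplication, 0 least\<close>
     (\<forall>x\<in>gh U. \<forall>y\<in>gh U. \<forall>z\<in>gh U. sle U x y \<longrightarrow> sle U (smul U x z) (smul U y z)) \<and>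
     (\<forall>x\<in>gh U. sle U (szero U) x)"

definition sadd :: "('a, 'b) stm_scheme \<Rightarrow> 'a \<Rightarrow> 'a \<Rightarrow> 'a" where
  "sadd U x y =
     (let ex = smul U (se U) x; ey = smul U (se U) y in
      if slt U ex ey then y else if slt U ey ex then x else ex)"

definition supertropical_semiring :: "('a, 'b) stm_scheme \<Rightarrow> bool" where
  "supertropical_semiring U \<longleftrightarrow> supertropical_monoid U \<and>
     (\<forall>x\<in>stcar U. \<forall>y\<in>stcar U. \<forall>z\<in>stcar U.
        sadd U (sadd U x y) z = sadd U x (sadd U y z)) \<and>
     (\<forall>x\<in>stcar U. \<forall>y\<in>stcar U. \<forall>z\<in>stcar U.
        smul U x (sadd U y z) = sadd U (smul U x y) (smul U x z))"

definition transmission ::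
  "('a, 'c) stm_scheme \<Rightarrow> ('b, 'd) stm_scheme \<Rightarrow> ('a \<Rightarrow> 'b) \<Rightarrow> bool" where
  "transmission U V f \<longleftrightarrow>
     (\<forall>x\<in>stcar U. f x \<in> stcar V) \<and>
     f (szero U) = szero V \<and> f (sone U) = sone V \<and>
     (\<forall>x\<in>stcar U. \<forall>y\<in>stcar U. f (smul U x y) = smul V (f x) (f y)) \<and>
     f (se U) = se V \<and>
     (\<forall>x\<in>gh U. \<forall>y\<in>gh U. sle U x y \<longrightarrow> sle V (f x) (f y))"

definition ghost_kernel ::
  "('a, 'c) stm_scheme \<Rightarrow> ('b, 'd) stm_scheme \<Rightarrow> ('a \<Rightarrow> 'b) \<Rightarrow> 'a set" where
  "ghost_kernel U V f = {x \<in> stcar U. f x \<in> gh V}"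

definition zero_kernel ::
  "('a, 'c) stm_scheme \<Rightarrow> ('b, 'd) stm_scheme \<Rightarrow> ('a \<Rightarrow> 'b) \<Rightarrow> 'a set" where
  "zero_kernel U V f = {x \<in> stcar U. f x = szero V}"

definition fiber_contraction ::
  "('a, 'c) stm_scheme \<Rightarrow> ('b, 'd) stm_scheme \<Rightarrow> ('a \<Rightarrow> 'b) \<Rightarrow> bool" where
  "fiber_contraction U V f \<longleftrightarrow> transmission U V f \<and> f ` stcar U = stcar V \<and>
     bij_betw f (gh U) (gh V) \<and>
     (\<forall>x\<in>gh U. \<forall>y\<in>gh U. sle U x y \<longleftrightarrow> sle V (f x) (f y))"

definition fiber_contraction_over ::
  "'a set \<Rightarrow> ('a, 'c) stm_scheme \<Rightarrow> ('a, 'd) stm_scheme \<Rightarrow> ('a \<Rightarrow> 'a) \<Rightarrow> bool" where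
  "fiber_contraction_over N U V f \<longleftrightarrow> fiber_contraction U V f \<and>
     gh U = N \<and> gh V = N \<and> (\<forall>x\<in>N. f x = x)"

definition ideal_compression ::
  "('a, 'c) stm_scheme \<Rightarrow> ('a, 'd) stm_scheme \<Rightarrow> ('a \<Rightarrow> 'a) \<Rightarrow> bool" where
  "ideal_compression U V f \<longleftrightarrow> fiber_contraction_over (gh U) U V f \<and>
     bij_betw f (stcar U - ghost_kernel U V f) (tang V)"

definition tangible_transmission ::
  "('a, 'c) stm_scheme \<Rightarrow> ('b, 'd) stm_scheme \<Rightarrow> ('a \<Rightarrow> 'b) \<Rightarrow> bool" where
  "tangible_transmission U V f \<longleftrightarrow> transmission U V f \<and>
     f ` tang U \<subseteq> tang V \<union> {szero V}"

definition ghost_contraction ::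
  "('a, 'c) stm_scheme \<Rightarrow> ('b, 'd) stm_scheme \<Rightarrow> ('a \<Rightarrow> 'b) \<Rightarrow> bool" where
  "ghost_contraction U V f \<longleftrightarrow> transmission U V f \<and> f ` gh U = gh V \<and>
     bij_betw f (stcar U - (gh U \<union> zero_kernel U V f)) (tang V)"

definition strict_ghost_contraction ::
  "('a, 'c) stm_scheme \<Rightarrow> ('b, 'd) stm_scheme \<Rightarrow> ('a \<Rightarrow> 'b) \<Rightarrow> bool" where
  "strict_ghost_contraction U V f \<longleftrightarrow> ghost_contraction U V f \<and>
     zero_kernel U V f \<subseteq> gh U"

end

theory Submission
  imports Defs
begin

context
  fixes U :: "('a, 'c) stm_scheme"
  assumes M: "supertropical_monoid U"
begin

abbreviation "E x \<equiv> smul U (se U) x"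

lemma car_mul: "x \<in> stcar U \<Longrightarrow> y \<in> stcar U \<Longrightarrow> smul U x y \<in> stcar U"
  using M unfolding supertropical_monoid_def by auto

lemma e_car: "se U \<in> stcar U" "szero U \<in> stcar U" "sone U \<in> stcar U"
  using M unfolding supertropical_monoid_def by blast+

lemma m_assoc: "x \<in> stcar U \<Longrightarrow> y \<in> stcar U \<Longrightarrow> z \<in> stcar U \<Longrightarrow>
   smul U (smul U x y) z = smul U x (smul U y z)"
  using M unfolding supertropical_monoid_def by blast

lemma m_comm: "x \<in> stcar U \<Longrightarrow> y \<in> stcar U \<Longrightarrow> smul U x y = smul U y x"
  using M unfolding supertropical_monoid_def by blast

lemma e_idem: "smul U (se U) (se U) = se U"
  using M unfolding supertropical_monoid_def by blast

lemma zero_mul: "x \<in> stcar U \<Longrightarrow> smul U (szero U) x = szero U"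
  using M unfolding supertropical_monoid_def by blast

lemma E_zero: "E (szero U) = szero U"
  using m_comm[OF e_car(1) e_car(2)] zero_mul[OF e_car(1)] by simp

lemma E_eq_zero: "x \<in> stcar U \<Longrightarrow> E x = szero U \<Longrightarrow> x = szero U"
  using M unfolding supertropical_monoid_def by blast

lemma E_gh: "x \<in> stcar U \<Longrightarrow> E x \<in> gh U"
  unfolding gh_def by blast

lemma gh_car: "g \<in> gh U \<Longrightarrow> g \<in> stcar U"
  unfolding gh_def using car_mul e_car by blast

lemma E_id: "g \<in> gh U \<Longrightarrow> E g = g"
proof -
  assume "g \<in> gh U"
  then obtain w where w: "w \<in> stcar U" "g = E w" unfolding gh_def by blast
  show ?thesis using m_assoc[OF e_car(1) e_car(1) w(1)] e_idem w by simp
qed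

lemma E_mul: "x \<in> stcar U \<Longrightarrow> y \<in> stcar U \<Longrightarrow> smul U (E y) (E x) = E (smul U x y)"
proof -
  assume x: "x \<in> stcar U" and y: "y \<in> stcar U"
  have "smul U (E y) (E x) = smul U (se U) (smul U y (E x))"
    using m_assoc e_car x y car_mul by simp
  also have "smul U y (E x) = smul U (E x) y" using m_comm car_mul e_car x y by simp
  also have "\<dots> = smul U (se U) (smul U x y)" using m_assoc e_car x y by simp
  also have "smul U (se U) (smul U (se U) (smul U x y)) = E (smul U x y)"
    using E_id E_gh car_mul x y by simp
  finally show ?thesis .
qed

lemma le_total: "a \<in> gh U \<Longrightarrow> b \<in> gh U \<Longrightarrow> sle U a b \<or> sle U b a"
  using M unfolding supertropical_monoid_def by blast
lemma le_antisym: "a \<in> gh U \<Longrightarrow> b \<in> gh U \<Longrightarrow> sle U a b \<Longrightarrow> sle U b a \<Longrightarrow> a = b"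
  using M unfolding supertropical_monoid_def by blast
lemma le_trans: "a \<in> gh U \<Longrightarrow> b \<in> gh U \<Longrightarrow> c \<in> gh U \<Longrightarrow> sle U a b \<Longrightarrow> sle U b c \<Longrightarrow> sle U a c"
  using M unfolding supertropical_monoid_def by blast
lemma le_mono: "a \<in> gh U \<Longrightarrow> b \<in> gh U \<Longrightarrow> c \<in> gh U \<Longrightarrow> sle U a b \<Longrightarrow> sle U (smul U a c) (smul U b c)"
  using M unfolding supertropical_monoid_def by blast

lemma sadd_car: "x \<in> stcar U \<Longrightarrow> y \<in> stcar U \<Longrightarrow> sadd U x y \<in> stcar U"
  unfolding sadd_def Let_def using car_mul e_car by auto

lemma E_sadd: "x \<in> stcar U \<Longrightarrow> y \<in> stcar U \<Longrightarrow>
   E (sadd U x y) = (if slt U (E x) (E y) then E y else E x)"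
  unfolding sadd_def Let_def using E_id E_gh by auto

lemma slt_asym: "slt U a b \<Longrightarrow> a \<in> gh U \<Longrightarrow> b \<in> gh U \<Longrightarrow> \<not> slt U b a"
  unfolding slt_def using le_antisym by blast

lemma slt_trans: "slt U a b \<Longrightarrow> slt U b c \<Longrightarrow> a \<in> gh U \<Longrightarrow> b \<in> gh U \<Longrightarrow> c \<in> gh U \<Longrightarrow> slt U a c"
  unfolding slt_def using le_antisym le_trans by blast

lemma trich: "a \<in> gh U \<Longrightarrow> b \<in> gh U \<Longrightarrow> slt U a b \<or> a = b \<or> slt U b a"
  unfolding slt_def using le_total by blast

lemma sadd_assoc: "x \<in> stcar U \<Longrightarrow> y \<in> stcar U \<Longrightarrow> z \<in> stcar U \<Longrightarrow>
   sadd U (sadd U x y) z = sadd U x (sadd U y z)"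
proof -
  assume x: "x \<in> stcar U" and y: "y \<in> stcar U" and z: "z \<in> stcar U"
  have a: "E x \<in> gh U" and b: "E y \<in> gh U" and c: "E z \<in> gh U" using E_gh x y z by auto
  have ir: "\<not> slt U q q" for q unfolding slt_def by simp
  have S: "sadd U p q = (if slt U (E p) (E q) then q else if slt U (E q) (E p) then p else E p)" for p q
    unfolding sadd_def Let_def by simp
  note as = slt_asym[OF _ a b] slt_asym[OF _ b a] slt_asym[OF _ a c] slt_asym[OF _ c a]
    slt_asym[OF _ b c] slt_asym[OF _ c b]
  note tr = slt_trans[OF _ _ a b c] slt_trans[OF _ _ a c b] slt_trans[OF _ _ b a c]
     slt_trans[OF _ _ b c a] slt_trans[OF _ _ c a b] slt_trans[OF _ _ c b a]
  have ES: "E (sadd U p q) = (if slt U (E p) (E q) then E q else E p)" if "p \<in> stcar U" "q \<in> stcar U" for p q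
    using E_sadd that by simp
  have T: "(slt U p q \<and> \<not> slt U q p) \<or> p = q \<or> (slt U q p \<and> \<not> slt U p q)"
    if "p \<in> gh U" "q \<in> gh U" for p q
    using trich[OF that] slt_asym that by blast
  show ?thesis
    using T[OF a b] T[OF b c] T[OF a c]
    apply (simp only: S[of "sadd U x y"] S[of x "sadd U y z"] ES[OF x y] ES[OF y z])
    apply (elim disjE conjE)
    apply (simp_all add: E_id[OF a] E_id[OF b] E_id[OF c] ir S)
    apply (blast dest: tr)+
    done
qed

lemma semiring_of_cond:
  assumes C: "\<And>x y z. x \<in> stcar U \<Longrightarrow> y \<in> stcar U \<Longrightarrow> z \<in> stcar U \<Longrightarrow>
     slt U (E y) (E z) \<Longrightarrow> E (smul U x y) = E (smul U x z) \<Longrightarrow> smul U x z \<in> gh U"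
  shows "supertropical_semiring U"
  unfolding supertropical_semiring_def
proof (intro conjI ballI)
  show "supertropical_monoid U" by (rule M)
next
  fix x y z assume "x \<in> stcar U" "y \<in> stcar U" "z \<in> stcar U"
  then show "sadd U (sadd U x y) z = sadd U x (sadd U y z)" by (rule sadd_assoc)
next
  fix x y z assume x: "x \<in> stcar U" and y: "y \<in> stcar U" and z: "z \<in> stcar U"
  have a: "E x \<in> gh U" and b: "E y \<in> gh U" and c: "E z \<in> gh U" using E_gh x y z by auto
  have mono1: "sle U (E (smul U x y)) (E (smul U x z))" if "sle U (E y) (E z)"
    using le_mono[OF b c a that] E_mul[OF x y] E_mul[OF x z] by simp
  have mono2: "sle U (E (smul U x z)) (E (smul U x y))" if "sle U (E z) (E y)"
    using le_mono[OF c b a that] E_mul[OF x y] E_mul[OF x z] by simp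
  have g1: "E (smul U x y) \<in> gh U" "E (smul U x z) \<in> gh U" using E_gh car_mul x y z by auto
  have anti: "sle U (E (smul U x y)) (E (smul U x z)) \<Longrightarrow> sle U (E (smul U x z)) (E (smul U x y))
     \<Longrightarrow> E (smul U x y) = E (smul U x z)" using le_antisym[OF g1] by blast
  show "smul U x (sadd U y z) = sadd U (smul U x y) (smul U x z)"
  proof (cases "slt U (E y) (E z)")
    case True
    then have s: "sadd U y z = z" unfolding sadd_def Let_def by simp
    show ?thesis
    proof (cases "E (smul U x y) = E (smul U x z)")
      case True2: True
      have "smul U x z \<in> gh U" using C[OF x y z True True2] .
      then show ?thesis using s True2 E_id unfolding sadd_def Let_def slt_def by auto
    next
      case False
      then show ?thesis using s mono1 True unfolding sadd_def Let_def slt_def by auto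
    qed
  next
    case F1: False
    show ?thesis
    proof (cases "slt U (E z) (E y)")
      case True
      then have s: "sadd U y z = y" using le_antisym[OF b c] unfolding sadd_def Let_def slt_def by auto
      show ?thesis
      proof (cases "E (smul U x y) = E (smul U x z)")
        case True2: True
        have "smul U x y \<in> gh U" using C[OF x z y True True2[symmetric]] .
        then show ?thesis using s True2 E_id unfolding sadd_def Let_def slt_def by auto
      next
        case False
        then show ?thesis using s mono2 anti True unfolding sadd_def Let_def slt_def by auto
      qed
    next
      case False
      then have eq: "E y = E z" using F1 le_total[OF b c] unfolding slt_def by auto
      then have s: "sadd U y z = E y" unfolding sadd_def Let_def slt_def by auto
      have eq2: "E (smul U x y) = E (smul U x z)" using E_mul[OF x y] E_mul[OF x z] eq by simp
      have "smul U x (E y) = E (smul U x y)"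
        using m_assoc[OF x e_car(1) y] m_comm[OF x e_car(1)] m_assoc[OF e_car(1) x y] by simp
      then show ?thesis using s eq2 unfolding sadd_def Let_def slt_def by auto
    qed
  qed
qed

end

lemma cond_of_semiring:
  assumes S: "supertropical_semiring U"
    and x: "x \<in> stcar U" and y: "y \<in> stcar U" and z: "z \<in> stcar U"
    and lt: "slt U (smul U (se U) y) (smul U (se U) z)"
    and eq: "smul U (se U) (smul U x y) = smul U (se U) (smul U x z)"
  shows "smul U x z \<in> gh U"
proof -
  have M: "supertropical_monoid U" using S unfolding supertropical_semiring_def by blast
  have d: "smul U x (sadd U y z) = sadd U (smul U x y) (smul U x z)"
    using S x y z unfolding supertropical_semiring_def by blast
  have "sadd U y z = z" using lt unfolding sadd_def Let_def by simp
  moreover have "sadd U (smul U x y) (smul U x z) = smul U (se U) (smul U x y)"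
    using eq unfolding sadd_def Let_def slt_def by simp
  ultimately have "smul U x z = smul U (se U) (smul U x y)" using d by simp
  then show ?thesis using E_gh[OF M car_mul[OF M x y]] by simp
qed

lemma trans_E:
  assumes T: "transmission U W f" and w: "w \<in> stcar U"
    and fid: "f (smul U (se U) w) = smul U (se U) w"
    and e: "se U \<in> stcar U"
  shows "smul W (se W) (f w) = smul U (se U) w"
  using T w fid e unfolding transmission_def by metis

lemma ghost_eq_E: "supertropical_monoid U \<Longrightarrow> x \<in> stcar U \<Longrightarrow> x \<in> gh U \<longleftrightarrow> smul U (se U) x = x"
  using E_id E_gh by metis

theorem theorem2p9:
  fixes U U1 :: "'a stm" and V1 V :: "'b stm"
    and alpha :: "'a \<Rightarrow> 'b" and lam :: "'a \<Rightarrow> 'a"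
    and beta :: "'a \<Rightarrow> 'b" and mu :: "'b \<Rightarrow> 'b"
  assumes "supertropical_semiring U" and "supertropical_semiring V"
    and "supertropical_monoid U1" and "supertropical_monoid V1"
    and "transmission U V alpha" and "alpha ` stcar U = stcar V"
    and "ideal_compression U U1 lam"
    and "strict_ghost_contraction U1 V1 beta"
    and "tangible_transmission V1 V mu"
    and "fiber_contraction_over (gh V) V1 V mu"
    and "\<forall>x\<in>stcar U. alpha x = mu (beta (lam x))"
  shows "supertropical_semiring U1 \<and> supertropical_semiring V1"
proof
  have UM: "supertropical_monoid U" using assms(1) unfolding supertropical_semiring_def by blast
  have VM: "supertropical_monoid V" using assms(2) unfolding supertropical_semiring_def by blast
  have U1M: "supertropical_monoid U1" by (rule assms(3))
  have V1M: "supertropical_monoid V1" by (rule assms(4))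
  have LT: "transmission U U1 lam" and Lsurj: "lam ` stcar U = stcar U1"
    and Lord: "\<forall>x\<in>gh U. \<forall>y\<in>gh U. sle U x y \<longleftrightarrow> sle U1 (lam x) (lam y)"
    and LghU1: "gh U1 = gh U" and Lid: "\<forall>x\<in>gh U. lam x = x"
  proof -
    have IC: "fiber_contraction_over (gh U) U U1 lam" using assms(7) unfolding ideal_compression_def by simp
    then have FC: "fiber_contraction U U1 lam" unfolding fiber_contraction_over_def by simp
    show "transmission U U1 lam" "lam ` stcar U = stcar U1"
      "\<forall>x\<in>gh U. \<forall>y\<in>gh U. sle U x y \<longleftrightarrow> sle U1 (lam x) (lam y)"
      using FC unfolding fiber_contraction_def by simp_all
    show "gh U1 = gh U" "\<forall>x\<in>gh U. lam x = x" using IC unfolding fiber_contraction_over_def by simp_all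
  qed
  have Lmul0: "\<forall>x\<in>stcar U. \<forall>y\<in>stcar U. lam (smul U x y) = smul U1 (lam x) (lam y)"
    using LT unfolding transmission_def by (elim conjE)
  have Lmul: "lam (smul U x y) = smul U1 (lam x) (lam y)" if "x \<in> stcar U" "y \<in> stcar U" for x y
    using Lmul0 that by blast
  have LE: "smul U1 (se U1) (lam w) = smul U (se U) w" if "w \<in> stcar U" for w
  proof -
    have "lam (smul U (se U) w) = smul U (se U) w" using Lid[rule_format, OF E_gh[OF UM that]] .
    then show ?thesis by (rule trans_E[OF LT that _ e_car(1)[OF UM]])
  qed
  show "supertropical_semiring U1"
  proof (rule semiring_of_cond[OF U1M])
    fix x' y' z' assume x': "x' \<in> stcar U1" and y': "y' \<in> stcar U1" and z': "z' \<in> stcar U1"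
      and lt: "slt U1 (smul U1 (se U1) y') (smul U1 (se U1) z')"
      and eq: "smul U1 (se U1) (smul U1 x' y') = smul U1 (se U1) (smul U1 x' z')"
    have "x' \<in> lam ` stcar U" using x' Lsurj by simp
    then obtain x where x: "x \<in> stcar U" "lam x = x'" by (elim imageE) simp
    have "y' \<in> lam ` stcar U" using y' Lsurj by simp
    then obtain y where y: "y \<in> stcar U" "lam y = y'" by (elim imageE) simp
    have "z' \<in> lam ` stcar U" using z' Lsurj by simp
    then obtain z where z: "z \<in> stcar U" "lam z = z'" by (elim imageE) simp
    have xy: "smul U x y \<in> stcar U" "smul U x z \<in> stcar U" using car_mul[OF UM] x y z by auto
    have eqU: "smul U (se U) (smul U x y) = smul U (se U) (smul U x z)"
      using eq LE[OF xy(1)] LE[OF xy(2)] Lmul x y z by simp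
    have gy: "smul U (se U) y \<in> gh U" and gz: "smul U (se U) z \<in> gh U" using E_gh[OF UM] y z by auto
    have "slt U1 (smul U (se U) y) (smul U (se U) z)" using lt LE[OF y(1)] LE[OF z(1)] unfolding y(2) z(2) by simp
    then have ltU: "slt U (smul U (se U) y) (smul U (se U) z)"
    proof -
      have "sle U (smul U (se U) y) (smul U (se U) z) \<longleftrightarrow>
            sle U1 (lam (smul U (se U) y)) (lam (smul U (se U) z))" using Lord gy gz by blast
      also have "\<dots> \<longleftrightarrow> sle U1 (smul U (se U) y) (smul U (se U) z)"
        using Lid[rule_format, OF gy] Lid[rule_format, OF gz] by simp
      finally show ?thesis using \<open>slt U1 (smul U (se U) y) (smul U (se U) z)\<close> unfolding slt_def by simp
    qed
    have "smul U x z \<in> gh U" using cond_of_semiring[OF assms(1) x(1) y(1) z(1) ltU eqU] .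
    then have "lam (smul U x z) \<in> gh U1" using Lid LghU1 by simp
    then show "smul U1 x' z' \<in> gh U1" using Lmul x z by simp
  qed
next
  have UM: "supertropical_monoid U" using assms(1) unfolding supertropical_semiring_def by blast
  have VM: "supertropical_monoid V" using assms(2) unfolding supertropical_semiring_def by blast
  have V1M: "supertropical_monoid V1" by (rule assms(4))
  have MT: "transmission V1 V mu" 
    and Mord: "\<forall>x\<in>gh V1. \<forall>y\<in>gh V1. sle V1 x y \<longleftrightarrow> sle V (mu x) (mu y)"
    and MghV1: "gh V1 = gh V" and Mid: "\<forall>x\<in>gh V. mu x = x"
  proof -
    have FC: "fiber_contraction V1 V mu" using assms(10) unfolding fiber_contraction_over_def by simp
    show "transmission V1 V mu"
      "\<forall>x\<in>gh V1. \<forall>y\<in>gh V1. sle V1 x y \<longleftrightarrow> sle V (mu x) (mu y)"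
      using FC unfolding fiber_contraction_def by simp_all
    show "gh V1 = gh V" "\<forall>x\<in>gh V. mu x = x" using assms(10) unfolding fiber_contraction_over_def by simp_all
  qed
  have Mtang: "mu ` tang V1 \<subseteq> tang V \<union> {szero V}"
    using assms(9) unfolding tangible_transmission_def by blast
  have Mmul: "mu (smul V1 x y) = smul V (mu x) (mu y)" if "x \<in> stcar V1" "y \<in> stcar V1" for x y
    using MT that unfolding transmission_def by simp
  have Mcar: "mu x \<in> stcar V" if "x \<in> stcar V1" for x using MT that unfolding transmission_def by simp
  have ME: "smul V (se V) (mu w) = smul V1 (se V1) w" if "w \<in> stcar V1" for w
  proof -
    have "mu (smul V1 (se V1) w) = smul V1 (se V1) w" using Mid MghV1 E_gh[OF V1M that] by auto
    then show ?thesis by (rule trans_E[OF MT that _ e_car(1)[OF V1M]])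
  qed
  have z0: "mu (szero V1) = szero V" using MT unfolding transmission_def by (elim conjE)
  have z1: "szero V1 \<in> gh V1" using E_gh[OF V1M e_car(2)[OF V1M]] E_zero[OF V1M] by simp
  have zz: "szero V = szero V1" using z0 z1 Mid MghV1 by auto
  have Ez: "smul V (se V) (szero V) = szero V" by (rule E_zero[OF VM])
  have Ez0: "x = szero V1" if "x \<in> stcar V1" "smul V1 (se V1) x = szero V1" for x
    using E_eq_zero[OF V1M that] .
  show "supertropical_semiring V1"
  proof (rule semiring_of_cond[OF V1M])
    fix x y z assume x: "x \<in> stcar V1" and y: "y \<in> stcar V1" and z: "z \<in> stcar V1"
      and lt: "slt V1 (smul V1 (se V1) y) (smul V1 (se V1) z)"
      and eq: "smul V1 (se V1) (smul V1 x y) = smul V1 (se V1) (smul V1 x z)"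
    have xy: "smul V1 x y \<in> stcar V1" "smul V1 x z \<in> stcar V1" using car_mul[OF V1M] x y z by auto
    show "smul V1 x z \<in> gh V1"
    proof (rule ccontr)
      assume ng: "smul V1 x z \<notin> gh V1"
      then have "smul V1 x z \<in> tang V1" using xy unfolding tang_def by blast
      then have "mu (smul V1 x z) \<in> tang V \<union> {szero V}" using Mtang by blast
      moreover have "mu (smul V1 x z) \<noteq> szero V"
      proof
        assume h: "mu (smul V1 x z) = szero V"
        have "smul V1 (se V1) (smul V1 x z) = szero V1" using ME[OF xy(2)] h Ez zz by simp
        then have "smul V1 x z = szero V1" using Ez0 xy by blast
        then show False using ng z1 by simp
      qed
      ultimately have nt: "mu (smul V1 x z) \<notin> gh V" unfolding tang_def by blast
      have gy: "smul V1 (se V1) y \<in> gh V1" and gz: "smul V1 (se V1) z \<in> gh V1" using E_gh[OF V1M] y z by auto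
      have ltV: "slt V (smul V (se V) (mu y)) (smul V (se V) (mu z))"
      proof -
        have "sle V1 (smul V1 (se V1) y) (smul V1 (se V1) z) \<longleftrightarrow>
              sle V (mu (smul V1 (se V1) y)) (mu (smul V1 (se V1) z))" using Mord gy gz by blast
        also have "\<dots> \<longleftrightarrow> sle V (smul V1 (se V1) y) (smul V1 (se V1) z)"
          using Mid[rule_format, of "smul V1 (se V1) y"] Mid[rule_format, of "smul V1 (se V1) z"] gy gz MghV1 by simp
        finally show ?thesis using lt ME[OF y] ME[OF z] unfolding slt_def by simp
      qed
      have eqV: "smul V (se V) (smul V (mu x) (mu y)) = smul V (se V) (smul V (mu x) (mu z))"
        using eq ME[OF xy(1)] ME[OF xy(2)] Mmul x y z by simp
      have "smul V (mu x) (mu z) \<in> gh V"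
        using cond_of_semiring[OF assms(2) Mcar[OF x] Mcar[OF y] Mcar[OF z] ltV eqV] .
      then show False using nt Mmul x z by simp
    qed
  qed
qed

end
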